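(* Let $\mathcal{A}*\mathcal{X}=\mathcal{B}$ be a consistent tensor system with unique solution $\mathcal{X}^*$, $\mathcal{A}\in\mathbb{R}^{n_1\times n_2\times n}$, $\mathcal{B}\in\mathbb{R}^{n_1\times n_3\times n}$, let $\alpha>0$, and let $\mathcal{X}(t)$ be the iterates of cyclic frontal slice descent with learning rate $\alpha$. With $\mathcal{E}(t)=\|\mathcal{X}(t)-\mathcal{X}^*\|_F$ (so $\mathcal{E}(t)=\|\mathcal{X}^*\|_F$ for $t\le 0$), $$\kappa=\max_{i=1,\dots,n}\|\mathcal{I}-\alpha\tilde{\mathcal{A}}_i^T*\tilde{\mathcal{A}}_i\|_{op},\qquad \mu=\max_{i\neq j}\|\tilde{\mathcal{A}}_i^T*\tilde{\mathcal{A}}_j\|_{op},$$ we have for every $t\ge 0$: $$\mathcal{E}(t+1)\le\kappa\,\mathcal{E}(t)+\alpha\mu\sum_{i=1}^{n-1}\mathcal{E}(t-i).$$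
   Context: For $\mathcal{A}\in\mathbb{R}^{n_1\times n_2\times n}$ with frontal slices $A_k=\mathcal{A}(:,:,k)$: $\mathrm{unfold}(\mathcal{A})$ stacks $A_1,\dots,A_n$ vertically, $\mathrm{fold}$ is its inverse, $\mathrm{bcirc}(\mathcal{A})$ is the $n_1n\times n_2n$ block-circulant matrix with $(p,q)$ block $A_{((p-q)\bmod n)+1}$, and $\mathcal{A}*\mathcal{X}=\mathrm{fold}(\mathrm{bcirc}(\mathcal{A})\mathrm{unfold}(\mathcal{X}))$. $\mathcal{I}$ is the identity tensor (first frontal slice the identity matrix, others zero). $\mathcal{A}^T$ transposes each frontal slice and reverses the order of slices $2,\dots,n$. $\|\cdot\|_F$ is the Frobenius norm and $\|\mathcal{C}\|_{op}=\sup_{\|\mathcal{X}\|_F=1}\|\mathcal{C}*\mathcal{X}\|_F=\|\mathrm{bcirc}(\mathcal{C})\|_2$. $\tilde{\mathcal{A}}_k$ has $k$-th frontal slice $A_k$ and zeros elsewhere. Cyclic frontal slice descent: set $\mathcal{X}(t)=0$ for $t\le 0$; for $t=0,1,\dots$ let $\mathcal{R}(t+1)=\mathcal{B}-\sum_{j=0}^{n-1}\tilde{\mathcal{A}}_{((t-j)\bmod n)+1}*\mathcal{X}(t-j)$ and $\mathcal{X}(t+1)=\mathcal{X}(t)+\alpha\tilde{\mathcal{A}}_{(t\bmod n)+1}^T*\mathcal{R}(t+1)$. *)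

theory Defs
  imports Complex_Main
begin

text \<open>Third-order real tensors are represented as functions nat => nat => nat => real,
  indexed 0-based (row, column, frontal slice); dimensions are carried explicitly
  and entries outside the index box are ignored.\<close>

type_synonym tensor = "nat \<Rightarrow> nat \<Rightarrow> nat \<Rightarrow> real"

text \<open>t-product: fold(bcirc(A) unfold(X)), written out; A has m2 columns, n slices.
  Block (p,q) of bcirc(A) is the slice A_((p-q) mod n) (0-based).\<close>
definition tprod :: "nat \<Rightarrow> nat \<Rightarrow> tensor \<Rightarrow> tensor \<Rightarrow> tensor" where
  "tprod m2 n A X = (\<lambda>i j k. \<Sum>l<m2. \<Sum>q<n. A i l ((k + n - q) mod n) * X l j q)"

definition tadd :: "tensor \<Rightarrow> tensor \<Rightarrow> tensor" where
  "tadd X Y = (\<lambda>i j k. X i j k + Y i j k)"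

definition tsub :: "tensor \<Rightarrow> tensor \<Rightarrow> tensor" where
  "tsub X Y = (\<lambda>i j k. X i j k - Y i j k)"

definition tscale :: "real \<Rightarrow> tensor \<Rightarrow> tensor" where
  "tscale c X = (\<lambda>i j k. c * X i j k)"

definition tzero :: tensor where
  "tzero = (\<lambda>i j k. 0)"

definition tident :: tensor where
  "tident = (\<lambda>i j k. if k = 0 \<and> i = j then 1 else 0)"

definition ttrans :: "nat \<Rightarrow> tensor \<Rightarrow> tensor" where
  "ttrans n A = (\<lambda>i j k. A j i ((n - k) mod n))"

definition tslice :: "tensor \<Rightarrow> nat \<Rightarrow> tensor" where
  "tslice A k = (\<lambda>i j q. if q = k then A i j k else 0)"

definition frob :: "nat \<Rightarrow> nat \<Rightarrow> nat \<Rightarrow> tensor \<Rightarrow> real" where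
  "frob m1 m2 n X = sqrt (\<Sum>i<m1. \<Sum>j<m2. \<Sum>k<n. (X i j k)\<^sup>2)"

text \<open>Operator norm of an m1 x m2 x n tensor C: sup of ||C*X||_F over ||X||_F = 1,
  X of size m2 x 1 x n (this is exactly the spectral norm of bcirc(C)).\<close>
definition opnorm :: "nat \<Rightarrow> nat \<Rightarrow> nat \<Rightarrow> tensor \<Rightarrow> real" where
  "opnorm m1 m2 n C = Sup {frob m1 1 n (tprod m2 n C X) | X. frob m2 1 n X = 1}"

text \<open>Iterate t (t>=0); X(t) = 0 for t <= 0.
  X(t+1) = X(t) + alpha * tilde A_(t mod n)^T * R(t+1), with
  R(t+1) = B - sum_(j<n) tilde A_((t-j) mod n) * X(t-j), terms with t-j<0 vanish.\<close>
fun cfsd :: "tensor \<Rightarrow> tensor \<Rightarrow> real \<Rightarrow> nat \<Rightarrow> nat \<Rightarrow> nat \<Rightarrow> nat \<Rightarrow> tensor" where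
  "cfsd A B \<alpha> n1 n2 n 0 = tzero"
| "cfsd A B \<alpha> n1 n2 n (Suc t) =
     tadd (cfsd A B \<alpha> n1 n2 n t)
       (tscale \<alpha> (tprod n1 n (ttrans n (tslice A (t mod n)))
          (\<lambda>i j k. B i j k - (\<Sum>jj<n. if jj \<le> t
               then tprod n2 n (tslice A ((t - jj) mod n)) (cfsd A B \<alpha> n1 n2 n (t - jj)) i j k
               else 0))))"

end

theory Submission
  imports Defs "HOL-Analysis.L2_Norm"
begin

lemma int_mod_sub: "q \<le> n \<Longrightarrow> int ((a + n - q) mod n) = (int a - int q) mod int n"
proof -
  assume "q \<le> n"
  then have "int (a + n - q) = (int a - int q) + int n" by simp
  then show ?thesis by (simp add: of_nat_mod)
qed

lemma shift_bij:
  assumes "(n::nat) > 0" 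
  shows "(\<lambda>q. (a + n - q) mod n) ` {..<n} = {..<n}"
proof (rule endo_inj_surj)
  show "(\<lambda>q. (a + n - q) mod n) ` {..<n} \<subseteq> {..<n}" using assms by (auto intro!: mod_less_divisor)
  show "inj_on (\<lambda>q. (a + n - q) mod n) {..<n}"
  proof (rule inj_onI)
    fix x y assume x: "x \<in> {..<n}" and y: "y \<in> {..<n}" and e: "(a + n - x) mod n = (a + n - y) mod n"
    have "(int a - int x) mod int n = (int a - int y) mod int n"
      using int_mod_sub[of x n a] int_mod_sub[of y n a] x y e by auto
    then have "int n dvd (int a - int x) - (int a - int y)" by (simp only: mod_eq_dvd_iff)
    then have "int n dvd int y - int x" by simp
    then have "int y mod int n = int x mod int n" by (simp only: mod_eq_dvd_iff)
    then have "int x mod int n = int y mod int n" by simp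
    then show "x = y" using x y by simp
  qed
qed simp

lemma shift_bij2:
  assumes "(n::nat) > 0" 
  shows "(\<lambda>q. (q + r) mod n) ` {..<n} = {..<n}"
proof (rule endo_inj_surj)
  show "(\<lambda>q. (q + r) mod n) ` {..<n} \<subseteq> {..<n}" using assms by (auto intro!: mod_less_divisor)
  show "inj_on (\<lambda>q. (q + r) mod n) {..<n}"
  proof (rule inj_onI)
    fix x y assume x: "x \<in> {..<n}" and y: "y \<in> {..<n}" and e: "(x + r) mod n = (y + r) mod n"
    have "int (x + r) mod int n = int (y + r) mod int n"
      using e by (metis of_nat_mod)
    then have "(int x + int r) mod int n = (int y + int r) mod int n" by simp
    then have "int n dvd (int x + int r) - (int y + int r)" by (simp only: mod_eq_dvd_iff)
    then have "int n dvd int x - int y" by simp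
    then have "int x mod int n = int y mod int n" by (simp only: mod_eq_dvd_iff)
    then show "x = y" using x y by simp
  qed
qed simp

lemma sum_shift:
  assumes "(n::nat) > 0"
  shows "(\<Sum>q<n. f ((a + n - q) mod n)) = (\<Sum>q<n. (f q :: real))"
proof -
  have inj: "inj_on (\<lambda>q. (a + n - q) mod n) {..<n}"
    by (rule eq_card_imp_inj_on) (auto simp: shift_bij[OF assms])
  have "(\<Sum>q<n. f q) = sum f ((\<lambda>q. (a + n - q) mod n) ` {..<n})" using shift_bij[OF assms] by simp
  also have "\<dots> = (\<Sum>q<n. f ((a + n - q) mod n))" by (rule sum.reindex[OF inj, unfolded comp_def])
  finally show ?thesis by simp
qed

lemma sum_shift2:
  assumes "(n::nat) > 0"
  shows "(\<Sum>q<n. f ((q + r) mod n)) = (\<Sum>q<n. (f q :: real))"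
proof -
  have inj: "inj_on (\<lambda>q. (q + r) mod n) {..<n}"
    by (rule eq_card_imp_inj_on) (auto simp: shift_bij2[OF assms])
  have "(\<Sum>q<n. f q) = sum f ((\<lambda>q. (q + r) mod n) ` {..<n})" using shift_bij2[OF assms] by simp
  also have "\<dots> = (\<Sum>q<n. f ((q + r) mod n))" by (rule sum.reindex[OF inj, unfolded comp_def])
  finally show ?thesis by simp
qed

lemma mod_id1:
  assumes "q < n" "r < (n::nat)"
  shows "((q + r) mod n + n - r) mod n = q"
proof -
  have "int (((q + r) mod n + n - r) mod n) = (int ((q + r) mod n) - int r) mod int n"
    using assms by (intro int_mod_sub) simp
  also have "\<dots> = ((int q + int r) mod int n - int r) mod int n" by (simp add: of_nat_mod)
  also have "\<dots> = int q mod int n" by (simp add: mod_diff_left_eq)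
  also have "\<dots> = int q" using assms by simp
  finally show ?thesis by simp
qed

lemma mod_id2:
  assumes "q < n" "r < (n::nat)"
  shows "(k + n - (q + r) mod n) mod n = ((k + n - r) mod n + n - q) mod n"
proof -
  have "int ((k + n - (q + r) mod n) mod n) = (int k - int ((q + r) mod n)) mod int n"
    using assms by (intro int_mod_sub) simp
  also have "\<dots> = (int k - (int q + int r) mod int n) mod int n" by (simp add: of_nat_mod)
  also have "\<dots> = (int k - (int q + int r)) mod int n" by (simp add: mod_diff_right_eq)
  also have "\<dots> = ((int k - int r) mod int n - int q) mod int n" by (simp add: mod_diff_left_eq algebra_simps)
  also have "\<dots> = (int ((k + n - r) mod n) - int q) mod int n"
    using int_mod_sub[of r n k] assms by simp
  also have "\<dots> = int (((k + n - r) mod n + n - q) mod n)"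
    using int_mod_sub[of q n "(k + n - r) mod n"] assms by simp
  finally show ?thesis by simp
qed

lemma tprod_cong:
  "(\<And>l q. l < m \<Longrightarrow> q < n \<Longrightarrow> X l j q = Y l j q) \<Longrightarrow> tprod m n C X i j k = tprod m n C Y i j k"
  unfolding tprod_def by (intro sum.cong refl) auto

lemma tprod_sum_right:
  "tprod m n C (\<lambda>i j k. \<Sum>s\<in>S. F s i j k) i j k = (\<Sum>s\<in>S. tprod m n C (F s) i j k)"
  unfolding tprod_def by (simp add: sum_distrib_left sum.swap[of _ S])

lemma tprod_sum_left:
  "tprod m n (\<lambda>i j k. \<Sum>s\<in>S. F s i j k) X i j k = (\<Sum>s\<in>S. tprod m n (F s) X i j k)"
  unfolding tprod_def by (simp add: sum_distrib_right sum.swap[of _ S])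

lemma tprod_sub_right:
  "tprod m n C (\<lambda>i j k. X i j k - Y i j k) i j k = tprod m n C X i j k - tprod m n C Y i j k"
  unfolding tprod_def by (simp add: right_diff_distrib sum_subtractf)

lemma tprod_neg_right:
  "tprod m n C (\<lambda>i j k. - X i j k) i j k = - tprod m n C X i j k"
  unfolding tprod_def by (simp add: sum_negf)

lemma tprod_sub_left:
  "tprod m n (\<lambda>i j k. C i j k - D i j k) X i j k = tprod m n C X i j k - tprod m n D X i j k"
  unfolding tprod_def by (simp add: left_diff_distrib sum_subtractf)

lemma tprod_scale_left:
  "tprod m n (\<lambda>i j k. c * C i j k) X i j k = c * tprod m n C X i j k"
  unfolding tprod_def by (simp add: sum_distrib_left mult.assoc)

lemma tprod_zero_right: "tprod m n C tzero i j k = 0"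
  unfolding tprod_def tzero_def by simp


lemma tprod_ident:
  assumes "i < m" "k < n"
  shows "tprod m n tident X i j k = X i j k"
proof -
  have "tprod m n tident X i j k = (\<Sum>q<n. if (k + n - q) mod n = 0 then X i j q else 0)"
  proof -
    have "tprod m n tident X i j k = (\<Sum>l<m. \<Sum>q<n. if (k + n - q) mod n = 0 \<and> i = l then X l j q else 0)"
      unfolding tprod_def tident_def by (intro sum.cong refl) simp
    also have "\<dots> = (\<Sum>q<n. \<Sum>l<m. if l = i then (if (k + n - q) mod n = 0 then X l j q else 0) else 0)"
      by (subst sum.swap) (rule sum.cong[OF refl], rule sum.cong[OF refl], simp)
    also have "\<dots> = (\<Sum>q<n. if (k + n - q) mod n = 0 then X i j q else 0)"
      using assms by simp
    finally show ?thesis .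
  qed
  also have "\<dots> = (\<Sum>q<n. if q = k then X i j q else 0)"
  proof (intro sum.cong refl)
    fix q assume q: "q \<in> {..<n}"
    have "(k + n - q) mod n = 0 \<longleftrightarrow> q = k"
    proof
      assume "(k + n - q) mod n = 0"
      then have "(int k - int q) mod int n = 0" using int_mod_sub[of q n k] q by simp
      then have "int n dvd int k - int q" by (simp add: dvd_eq_mod_eq_0)
      then have "int k mod int n = int q mod int n" by (simp only: mod_eq_dvd_iff)
      then show "q = k" using q assms by simp
    qed simp
    then show "(if (k + n - q) mod n = 0 then X i j q else 0) = (if q = k then X i j q else 0)" by simp
  qed
  also have "\<dots> = X i j k" using assms by simp
  finally show ?thesis .
qed


lemma swap_a: "(\<Sum>a\<in>A. \<Sum>b\<in>B. \<Sum>c\<in>C. (f a b c :: real)) = (\<Sum>b\<in>B. \<Sum>c\<in>C. \<Sum>a\<in>A. f a b c)"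
proof -
  have "(\<Sum>a\<in>A. \<Sum>b\<in>B. \<Sum>c\<in>C. f a b c) = (\<Sum>b\<in>B. \<Sum>a\<in>A. \<Sum>c\<in>C. f a b c)"
    by (rule sum.swap)
  also have "\<dots> = (\<Sum>b\<in>B. \<Sum>c\<in>C. \<Sum>a\<in>A. f a b c)"
    by (rule sum.cong[OF refl], rule sum.swap)
  finally show ?thesis .
qed

lemma tprod_assoc:
  assumes n: "n > 0"
  shows "tprod m1 n G (tprod m2 n H Z) i j k = tprod m2 n (tprod m1 n G H) Z i j k"
proof -
  have inner: "(\<Sum>q<n. G i l ((k + n - q) mod n) * H l p ((q + n - r) mod n))
      = (\<Sum>q<n. G i l (((k + n - r) mod n + n - q) mod n) * H l p q)" if r: "r < n" for l p r
  proof -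
    have "(\<Sum>q<n. G i l ((k + n - q) mod n) * H l p ((q + n - r) mod n))
       = (\<Sum>q<n. G i l ((k + n - (q + r) mod n) mod n) * H l p (((q + r) mod n + n - r) mod n))"
      by (rule sum_shift2[OF n, symmetric, where f = "\<lambda>q. G i l ((k + n - q) mod n) * H l p ((q + n - r) mod n)"])
    also have "\<dots> = (\<Sum>q<n. G i l (((k + n - r) mod n + n - q) mod n) * H l p q)"
      by (intro sum.cong refl) (simp add: mod_id1 mod_id2 r)
    finally show ?thesis .
  qed
  have "tprod m1 n G (tprod m2 n H Z) i j k
      = (\<Sum>l<m1. \<Sum>q<n. \<Sum>p<m2. \<Sum>r<n. G i l ((k + n - q) mod n) * H l p ((q + n - r) mod n) * Z p j r)"
    unfolding tprod_def by (simp add: sum_distrib_left mult.assoc)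
  also have "\<dots> = (\<Sum>l<m1. \<Sum>p<m2. \<Sum>r<n. \<Sum>q<n. G i l ((k + n - q) mod n) * H l p ((q + n - r) mod n) * Z p j r)"
    by (rule sum.cong[OF refl], rule swap_a)
  also have "\<dots> = (\<Sum>l<m1. \<Sum>p<m2. \<Sum>r<n. (\<Sum>q<n. G i l ((k + n - q) mod n) * H l p ((q + n - r) mod n)) * Z p j r)"
    by (simp add: sum_distrib_right)
  also have "\<dots> = (\<Sum>l<m1. \<Sum>p<m2. \<Sum>r<n. (\<Sum>q<n. G i l (((k + n - r) mod n + n - q) mod n) * H l p q) * Z p j r)"
    by (intro sum.cong refl) (simp add: inner)
  also have "\<dots> = (\<Sum>p<m2. \<Sum>r<n. \<Sum>l<m1. (\<Sum>q<n. G i l (((k + n - r) mod n + n - q) mod n) * H l p q) * Z p j r)"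
    by (rule swap_a)
  also have "\<dots> = tprod m2 n (tprod m1 n G H) Z i j k"
    unfolding tprod_def by (simp add: sum_distrib_right)
  finally show ?thesis .
qed

lemma frob_L2: "frob m1 m2 n X = L2_set (\<lambda>x. X (fst x) (fst (snd x)) (snd (snd x))) ({..<m1} \<times> {..<m2} \<times> {..<n})"
  unfolding frob_def L2_set_def by (simp add: sum.cartesian_product case_prod_beta)

lemma frob_cong:
  "(\<And>i j k. i < m1 \<Longrightarrow> j < m2 \<Longrightarrow> k < n \<Longrightarrow> X i j k = Y i j k) \<Longrightarrow> frob m1 m2 n X = frob m1 m2 n Y"
  unfolding frob_def by (intro arg_cong[where f = sqrt] sum.cong refl) auto

lemma frob_nonneg: "frob m1 m2 n X \<ge> 0"
  unfolding frob_L2 by simp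

lemma frob_add: "frob m1 m2 n (\<lambda>i j k. X i j k + Y i j k) \<le> frob m1 m2 n X + frob m1 m2 n Y"
  unfolding frob_L2 by (rule L2_set_triangle_ineq)

lemma frob_neg: "frob m1 m2 n (\<lambda>i j k. - X i j k) = frob m1 m2 n X"
  unfolding frob_def by simp

lemma frob_diff: "frob m1 m2 n (\<lambda>i j k. X i j k - Y i j k) \<le> frob m1 m2 n X + frob m1 m2 n Y"
  using frob_add[of m1 m2 n X "\<lambda>i j k. - Y i j k"] frob_neg[of m1 m2 n Y] by simp

lemma frob_scale: "c \<ge> 0 \<Longrightarrow> frob m1 m2 n (\<lambda>i j k. c * X i j k) = c * frob m1 m2 n X"
  unfolding frob_L2 by (simp add: L2_set_right_distrib)

lemma frob_sum:
  assumes "finite S"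
  shows "frob m1 m2 n (\<lambda>i j k. \<Sum>s\<in>S. F s i j k) \<le> (\<Sum>s\<in>S. frob m1 m2 n (F s))"
  using assms
proof (induction S rule: finite_induct)
  case empty
  then show ?case unfolding frob_def by simp
next
  case (insert x S)
  have "frob m1 m2 n (\<lambda>i j k. \<Sum>s\<in>insert x S. F s i j k)
      = frob m1 m2 n (\<lambda>i j k. F x i j k + (\<Sum>s\<in>S. F s i j k))"
    using insert by simp
  also have "\<dots> \<le> frob m1 m2 n (F x) + frob m1 m2 n (\<lambda>i j k. \<Sum>s\<in>S. F s i j k)"
    by (rule frob_add)
  also have "\<dots> \<le> frob m1 m2 n (F x) + (\<Sum>s\<in>S. frob m1 m2 n (F s))"
    using insert by simp
  finally show ?case using insert by simp
qed


lemma tprod_scale_right: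
  "tprod m n C (\<lambda>i j k. c * X i j k) i j k = c * tprod m n C X i j k"
  unfolding tprod_def by (simp add: sum_distrib_left mult.assoc mult.left_commute)

lemma frob_le_abs: "frob m1 m2 n Z \<le> (\<Sum>i<m1. \<Sum>j<m2. \<Sum>k<n. \<bar>Z i j k\<bar>)"
proof -
  have "frob m1 m2 n Z \<le> (\<Sum>x\<in>{..<m1} \<times> {..<m2} \<times> {..<n}. \<bar>Z (fst x) (fst (snd x)) (snd (snd x))\<bar>)"
    unfolding frob_L2 by (rule L2_set_le_sum_abs)
  also have "\<dots> = (\<Sum>i<m1. \<Sum>j<m2. \<Sum>k<n. \<bar>Z i j k\<bar>)"
    by (simp add: sum.cartesian_product case_prod_beta)
  finally show ?thesis .
qed

lemma frob_entry_le:
  assumes "i < m1" "j < m2" "k < n"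
  shows "(X i j k)\<^sup>2 \<le> (frob m1 m2 n X)\<^sup>2"
proof -
  let ?f = "\<lambda>x. X (fst x) (fst (snd x)) (snd (snd x))"
  have "(frob m1 m2 n X)\<^sup>2 = (\<Sum>x\<in>{..<m1} \<times> {..<m2} \<times> {..<n}. (?f x)\<^sup>2)"
    unfolding frob_L2 L2_set_def by (simp add: sum_nonneg)
  moreover have "(?f (i, j, k))\<^sup>2 \<le> (\<Sum>x\<in>{..<m1} \<times> {..<m2} \<times> {..<n}. (?f x)\<^sup>2)"
    by (rule member_le_sum) (use assms in auto)
  ultimately show ?thesis by simp
qed

lemma opnorm_bdd:
  "bdd_above {frob m1 1 n (tprod m2 n C X) | X. frob m2 1 n X = 1}"
proof -
  let ?M = "\<Sum>i<m1. \<Sum>j<(1::nat). \<Sum>k<n. \<Sum>l<m2. \<Sum>q<n. \<bar>C i l ((k + n - q) mod n)\<bar>"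
  show ?thesis
  proof (rule bdd_aboveI[of _ ?M], clarify)
    fix X assume X: "frob m2 1 n X = 1"
    have Xb: "\<bar>X l j q\<bar> \<le> 1" if "l < m2" "j < 1" "q < n" for l j q
    proof -
      have "(X l j q)\<^sup>2 \<le> 1" using frob_entry_le[OF that, of X] X by simp
      then show ?thesis by (simp add: abs_square_le_1)
    qed
    have "frob m1 1 n (tprod m2 n C X) \<le> (\<Sum>i<m1. \<Sum>j<(1::nat). \<Sum>k<n. \<bar>tprod m2 n C X i j k\<bar>)"
      by (rule frob_le_abs)
    also have "\<dots> \<le> ?M"
    proof (intro sum_mono)
      fix i j k assume j: "j \<in> {..<(1::nat)}"
      have "\<bar>tprod m2 n C X i j k\<bar> \<le> (\<Sum>l<m2. \<Sum>q<n. \<bar>C i l ((k + n - q) mod n) * X l j q\<bar>)"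
        unfolding tprod_def by (rule order_trans[OF sum_abs sum_mono]) (rule sum_abs)
      also have "\<dots> \<le> (\<Sum>l<m2. \<Sum>q<n. \<bar>C i l ((k + n - q) mod n)\<bar>)"
      proof (intro sum_mono)
        fix l q assume "l \<in> {..<m2}" "q \<in> {..<n}"
        then have "\<bar>X l j q\<bar> \<le> 1" using Xb j by auto
        then show "\<bar>C i l ((k + n - q) mod n) * X l j q\<bar> \<le> \<bar>C i l ((k + n - q) mod n)\<bar>"
          by (simp add: abs_mult mult_left_le)
      qed
      finally show "\<bar>tprod m2 n C X i j k\<bar> \<le> (\<Sum>l<m2. \<Sum>q<n. \<bar>C i l ((k + n - q) mod n)\<bar>)" .
    qed
    finally show "frob m1 1 n (tprod m2 n C X) \<le> ?M" .
  qed
qed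

lemma opnorm_upper:
  "frob m2 1 n X = 1 \<Longrightarrow> frob m1 1 n (tprod m2 n C X) \<le> opnorm m1 m2 n C"
  unfolding opnorm_def by (rule cSup_upper[OF _ opnorm_bdd]) auto

lemma opnorm_nonneg:
  assumes "m2 > 0" "n > 0"
  shows "0 \<le> opnorm m1 m2 n C"
proof -
  define X0 :: tensor where "X0 = (\<lambda>l j q. if l = 0 \<and> q = 0 then 1 else 0)"
  have "frob m2 1 n X0 = 1"
  proof -
    have "(\<Sum>i<m2. \<Sum>j<(1::nat). \<Sum>k<n. (X0 i j k)\<^sup>2) = (\<Sum>i<m2. if i = 0 then (\<Sum>k<n. if k = 0 then 1 else 0) else (0::real))"
    proof (intro sum.cong refl)
      fix i
      have sq: "\<And>P. ((if P then 1 else 0)::real)\<^sup>2 = (if P then 1 else 0)" by simp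
      show "(\<Sum>j<(1::nat). \<Sum>k<n. (X0 i j k)\<^sup>2) = (if i = 0 then (\<Sum>k<n. if k = 0 then 1 else 0) else (0::real))"
        unfolding X0_def sq by simp
    qed
    also have "\<dots> = 1" using assms by simp
    finally show ?thesis unfolding frob_def by simp
  qed
  then have "frob m1 1 n (tprod m2 n C X0) \<le> opnorm m1 m2 n C" by (rule opnorm_upper)
  then show ?thesis using frob_nonneg order_trans by blast
qed

lemma opnorm_col:
  assumes "m2 > 0" "n > 0"
  shows "frob m1 1 n (tprod m2 n C Y) \<le> opnorm m1 m2 n C * frob m2 1 n Y"
proof (cases "frob m2 1 n Y = 0")
  case True
  have z: "Y l 0 q = 0" if "l < m2" "q < n" for l q
  proof -
    have "(Y l 0 q)\<^sup>2 \<le> 0" using frob_entry_le[of l m2 0 1 q n Y] that True by simp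
    then show ?thesis by simp
  qed
  have "frob m1 1 n (tprod m2 n C Y) = frob m1 1 n tzero"
  proof (rule frob_cong)
    fix i j k :: nat assume "j < 1"
    then have "tprod m2 n C Y i j k = tprod m2 n C tzero i j k"
      by (intro tprod_cong) (simp add: z tzero_def)
    then show "tprod m2 n C Y i j k = tzero i j k" using tprod_zero_right[of m2 n C i j k] by (simp add: tzero_def)
  qed
  also have "\<dots> = 0" unfolding frob_def tzero_def by simp
  finally show ?thesis using True by simp
next
  case False
  define f where "f = frob m2 1 n Y"
  have fpos: "f > 0" using False frob_nonneg[of m2 1 n Y] unfolding f_def by simp
  have "frob m2 1 n (\<lambda>i j k. (1 / f) * Y i j k) = (1 / f) * f"
    unfolding f_def by (rule frob_scale) (simp add: frob_nonneg)
  then have "frob m2 1 n (\<lambda>i j k. (1 / f) * Y i j k) = 1" using fpos by simp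
  then have "frob m1 1 n (tprod m2 n C (\<lambda>i j k. (1 / f) * Y i j k)) \<le> opnorm m1 m2 n C"
    by (rule opnorm_upper)
  moreover have "tprod m2 n C (\<lambda>i j k. (1 / f) * Y i j k) = (\<lambda>i j k. (1 / f) * tprod m2 n C Y i j k)"
    by (intro ext) (rule tprod_scale_right)
  moreover have "frob m1 1 n (\<lambda>i j k. (1 / f) * tprod m2 n C Y i j k) = (1 / f) * frob m1 1 n (tprod m2 n C Y)"
    by (rule frob_scale) (use fpos in simp)
  ultimately have "(1 / f) * frob m1 1 n (tprod m2 n C Y) \<le> opnorm m1 m2 n C" by simp
  then have "frob m1 1 n (tprod m2 n C Y) / f \<le> opnorm m1 m2 n C" by simp
  then show ?thesis using fpos unfolding f_def[symmetric] by (simp add: pos_divide_le_eq)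
qed

lemma frob_col_sq:
  "(frob m1 m3 n Z)\<^sup>2 = (\<Sum>j<m3. (frob m1 1 n (\<lambda>i _ k. Z i j k))\<^sup>2)"
proof -
  have "(frob m1 m3 n Z)\<^sup>2 = (\<Sum>i<m1. \<Sum>j<m3. \<Sum>k<n. (Z i j k)\<^sup>2)"
    unfolding frob_def by (rule real_sqrt_pow2) (intro sum_nonneg zero_le_power2)
  also have "\<dots> = (\<Sum>j<m3. \<Sum>i<m1. \<Sum>k<n. (Z i j k)\<^sup>2)" by (rule sum.swap)
  also have "\<dots> = (\<Sum>j<m3. (frob m1 1 n (\<lambda>i _ k. Z i j k))\<^sup>2)"
  proof (rule sum.cong[OF refl])
    fix j
    have "(frob m1 1 n (\<lambda>i _ k. Z i j k))\<^sup>2 = (\<Sum>i<m1. \<Sum>j'<(1::nat). \<Sum>k<n. (Z i j k)\<^sup>2)"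
      unfolding frob_def by (rule real_sqrt_pow2) (intro sum_nonneg zero_le_power2)
    also have "\<dots> = (\<Sum>i<m1. \<Sum>k<n. (Z i j k)\<^sup>2)" by simp
    finally show "(\<Sum>i<m1. \<Sum>k<n. (Z i j k)\<^sup>2) = (frob m1 1 n (\<lambda>i _ k. Z i j k))\<^sup>2" by simp
  qed
  finally show ?thesis .
qed

lemma opnorm_ineq:
  assumes "m2 > 0" "n > 0"
  shows "frob m1 m3 n (tprod m2 n C X) \<le> opnorm m1 m2 n C * frob m2 m3 n X"
proof (rule power2_le_imp_le)
  let ?op = "opnorm m1 m2 n C"
  have col: "(\<lambda>i (_::nat) k. tprod m2 n C X i j k) = tprod m2 n C (\<lambda>l _ q. X l j q)" for j
    unfolding tprod_def by simp
  have "(frob m1 m3 n (tprod m2 n C X))\<^sup>2 = (\<Sum>j<m3. (frob m1 1 n (tprod m2 n C (\<lambda>l _ q. X l j q)))\<^sup>2)"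
    by (subst frob_col_sq) (simp only: col)
  also have "\<dots> \<le> (\<Sum>j<m3. (?op * frob m2 1 n (\<lambda>l _ q. X l j q))\<^sup>2)"
    by (intro sum_mono power_mono opnorm_col assms frob_nonneg)
  also have "\<dots> = ?op\<^sup>2 * (frob m2 m3 n X)\<^sup>2"
    by (subst frob_col_sq[of m2 m3 n X]) (simp only: power_mult_distrib sum_distrib_left)
  also have "\<dots> = (?op * frob m2 m3 n X)\<^sup>2" by (simp add: power_mult_distrib)
  finally show "(frob m1 m3 n (tprod m2 n C X))\<^sup>2 \<le> (?op * frob m2 m3 n X)\<^sup>2" .
  show "0 \<le> ?op * frob m2 m3 n X" using opnorm_nonneg[OF assms] frob_nonneg by simp
qed


theorem lemma1:
  fixes A B Xs :: tensor and n1 n2 n3 n :: nat and \<alpha> :: real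
  assumes dims: "n1 > 0" "n2 > 0" "n3 > 0" "n > 0"
    and alpha: "\<alpha> > 0"
    and sol: "\<forall>i<n1. \<forall>j<n3. \<forall>k<n. tprod n2 n A Xs i j k = B i j k"
    and uniq: "\<And>Y. (\<forall>i<n1. \<forall>j<n3. \<forall>k<n. tprod n2 n A Y i j k = B i j k) \<Longrightarrow>
                 (\<forall>i<n2. \<forall>j<n3. \<forall>k<n. Y i j k = Xs i j k)"
  defines "E \<equiv> (\<lambda>s::int. frob n2 n3 n (tsub (cfsd A B \<alpha> n1 n2 n (nat s)) Xs))"
    and "\<kappa> \<equiv> Max ((\<lambda>i. opnorm n2 n2 n (tsub tident
                  (tscale \<alpha> (tprod n1 n (ttrans n (tslice A i)) (tslice A i))))) ` {..<n})"
    and "\<mu> \<equiv> Max ((\<lambda>(i, j). opnorm n2 n2 n (tprod n1 n (ttrans n (tslice A i)) (tslice A j)))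
                  ` {(i, j). i < n \<and> j < n \<and> i \<noteq> j})"
  shows "\<forall>t::nat. E (int t + 1) \<le> \<kappa> * E (int t) + \<alpha> * \<mu> * (\<Sum>i=1..n-1. E (int t - int i))"
proof (intro allI)
  fix t :: nat
  define X where "X = cfsd A B \<alpha> n1 n2 n"
  define D where "D s = tsub (X s) Xs" for s
  define c where "c = t mod n"
  define G where "G = ttrans n (tslice A c)"
  define H where "H s = tprod n1 n G (tslice A s)" for s
  define idx where "idx jj = (t + n - jj) mod n" for jj
  define Y where "Y jj = D (nat (int t - int jj))" for jj
  have n: "n > 0" using dims by simp
  have Ejs: "E s = frob n2 n3 n (D (nat s))" for s unfolding E_def D_def X_def by simp

  have Bdec: "B l j q = (\<Sum>jj<n. tprod n2 n (tslice A (idx jj)) Xs l j q)" if "l < n1" "j < n3" "q < n" for l j q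
  proof -
    have "B l j q = tprod n2 n A Xs l j q" using sol that by simp
    also have "\<dots> = tprod n2 n (\<lambda>i j k. \<Sum>s<n. tslice A s i j k) Xs l j q"
      unfolding tprod_def by (intro sum.cong refl) (simp add: tslice_def n)
    also have "\<dots> = (\<Sum>s<n. tprod n2 n (tslice A s) Xs l j q)" by (rule tprod_sum_left)
    also have "\<dots> = (\<Sum>jj<n. tprod n2 n (tslice A (idx jj)) Xs l j q)"
      unfolding idx_def by (rule sum_shift[OF n, symmetric])
    finally show ?thesis .
  qed

  define R where "R = (\<lambda>i j k. B i j k - (\<Sum>jj<n. if jj \<le> t
               then tprod n2 n (tslice A ((t - jj) mod n)) (X (t - jj)) i j k else 0))"
  have step: "X (Suc t) = tadd (X t) (tscale \<alpha> (tprod n1 n G R))"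
    unfolding X_def R_def G_def c_def by simp
  have Rterm: "(if jj \<le> t then tprod n2 n (tslice A ((t - jj) mod n)) (X (t - jj)) l j q else 0)
      = tprod n2 n (tslice A (idx jj)) (X (nat (int t - int jj))) l j q" for jj l j q
  proof (cases "jj \<le> t")
    case True
    have "t + n - jj = (t - jj) + n" using True by simp
    then have "idx jj = (t - jj) mod n" unfolding idx_def by simp
    moreover have "nat (int t - int jj) = t - jj" using True by simp
    ultimately show ?thesis using True by simp
  next
    case False
    then have "nat (int t - int jj) = 0" by simp
    then show ?thesis using False tprod_zero_right unfolding X_def by simp
  qed
  have Req: "R l j q = - (\<Sum>jj<n. tprod n2 n (tslice A (idx jj)) (Y jj) l j q)" if "l < n1" "j < n3" "q < n" for l j q
  proof -
    have "R l j q = (\<Sum>jj<n. tprod n2 n (tslice A (idx jj)) Xs l j q)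
        - (\<Sum>jj<n. tprod n2 n (tslice A (idx jj)) (X (nat (int t - int jj))) l j q)"
      unfolding R_def using Bdec[OF that] Rterm by simp
    also have "\<dots> = (\<Sum>jj<n. tprod n2 n (tslice A (idx jj)) Xs l j q
        - tprod n2 n (tslice A (idx jj)) (X (nat (int t - int jj))) l j q)"
      by (simp add: sum_subtractf)
    also have "\<dots> = - (\<Sum>jj<n. tprod n2 n (tslice A (idx jj)) (Y jj) l j q)"
      unfolding Y_def D_def tsub_def by (simp add: tprod_sub_right sum_subtractf)
    finally show ?thesis .
  qed
  have GR: "tprod n1 n G R i j k = - (\<Sum>jj<n. tprod n2 n (H (idx jj)) (Y jj) i j k)" if "j < n3" for i j k
  proof -
    have "tprod n1 n G R i j k = tprod n1 n G (\<lambda>l j q. - (\<Sum>jj<n. tprod n2 n (tslice A (idx jj)) (Y jj) l j q)) i j k"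
      by (rule tprod_cong) (simp add: Req that)
    also have "\<dots> = - (\<Sum>jj<n. tprod n1 n G (tprod n2 n (tslice A (idx jj)) (Y jj)) i j k)"
      by (simp add: tprod_neg_right tprod_sum_right)
    also have "\<dots> = - (\<Sum>jj<n. tprod n2 n (H (idx jj)) (Y jj) i j k)"
      unfolding H_def by (simp add: tprod_assoc[OF n])
    finally show ?thesis .
  qed
  have c0: "idx 0 = c" unfolding idx_def c_def by simp
  have Y0: "Y 0 = D t" unfolding Y_def by simp
  define P where "P = tsub tident (tscale \<alpha> (H c))"
  define Q where "Q jj = tprod n2 n (H (idx jj)) (Y jj)" for jj
  have main: "D (Suc t) i j k = tprod n2 n P (D t) i j k - \<alpha> * (\<Sum>jj\<in>{1..<n}. Q jj i j k)"
    if "i < n2" "j < n3" "k < n" for i j k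
  proof -
    have 1: "D (Suc t) i j k = D t i j k + \<alpha> * tprod n1 n G R i j k"
      unfolding D_def tsub_def using step by (simp add: tadd_def tscale_def)
    have 2: "tprod n1 n G R i j k = - (\<Sum>jj<n. Q jj i j k)" using GR[OF that(2)] unfolding Q_def by simp
    have 3: "(\<Sum>jj<n. Q jj i j k) = Q 0 i j k + (\<Sum>jj\<in>{1..<n}. Q jj i j k)"
      using n by (simp add: lessThan_atLeast0 sum.atLeast_Suc_lessThan)
    have 4: "Q 0 i j k = tprod n2 n (H c) (D t) i j k" unfolding Q_def c0 Y0 ..
    have 5: "tprod n2 n P (D t) i j k = D t i j k - \<alpha> * tprod n2 n (H c) (D t) i j k"
      unfolding P_def tsub_def tscale_def by (simp add: tprod_sub_left tprod_scale_left tprod_ident that)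
    show ?thesis using 1 2 3 4 5 by (simp add: algebra_simps)
  qed
  have fin: "finite {(i, j). i < n \<and> j < n \<and> i \<noteq> j}"
    by (rule finite_subset[of _ "{..<n} \<times> {..<n}"]) auto
  have Pk: "opnorm n2 n2 n P \<le> \<kappa>"
    unfolding \<kappa>_def P_def H_def G_def
    by (rule Max_ge) (auto simp: c_def n)
  have Qb: "frob n2 n3 n (Q jj) \<le> \<mu> * E (int t - int jj)" if jj: "jj \<in> {1..<n}" for jj
  proof -
    have ne: "idx jj \<noteq> c"
    proof
      assume "idx jj = c"
      then have "(int t - int jj) mod int n = int t mod int n"
        using int_mod_sub[of jj n t] jj unfolding idx_def c_def by (simp add: of_nat_mod)
      then have "int n dvd (int t - int jj) - int t" by (simp only: mod_eq_dvd_iff)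
      then have "int n dvd int jj" by (simp add: dvd_diff_commute)
      then have "n dvd jj" by simp
      then show False using jj by (auto dest: dvd_imp_le)
    qed
    have "frob n2 n3 n (Q jj) \<le> opnorm n2 n2 n (H (idx jj)) * frob n2 n3 n (Y jj)"
      unfolding Q_def by (rule opnorm_ineq[OF dims(2) n])
    also have "opnorm n2 n2 n (H (idx jj)) \<le> \<mu>"
      unfolding \<mu>_def H_def G_def
      by (rule Max_ge[OF finite_imageI[OF fin]], rule image_eqI[where x = "(c, idx jj)"])
         (use ne n in \<open>auto simp: c_def idx_def\<close>)
    then have "opnorm n2 n2 n (H (idx jj)) * frob n2 n3 n (Y jj) \<le> \<mu> * frob n2 n3 n (Y jj)"
      by (rule mult_right_mono) (rule frob_nonneg)
    also have "frob n2 n3 n (Y jj) = E (int t - int jj)" unfolding Y_def Ejs ..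
    finally show ?thesis .
  qed
  have "E (int t + 1) = frob n2 n3 n (D (Suc t))" unfolding Ejs by (simp add: nat_add_distrib)
  also have "\<dots> = frob n2 n3 n (\<lambda>i j k. tprod n2 n P (D t) i j k - \<alpha> * (\<Sum>jj\<in>{1..<n}. Q jj i j k))"
    by (rule frob_cong) (simp add: main)
  also have "\<dots> \<le> frob n2 n3 n (tprod n2 n P (D t)) + frob n2 n3 n (\<lambda>i j k. \<alpha> * (\<Sum>jj\<in>{1..<n}. Q jj i j k))"
    by (rule frob_diff)
  also have "frob n2 n3 n (\<lambda>i j k. \<alpha> * (\<Sum>jj\<in>{1..<n}. Q jj i j k)) = \<alpha> * frob n2 n3 n (\<lambda>i j k. \<Sum>jj\<in>{1..<n}. Q jj i j k)"
    using alpha by (intro frob_scale) simp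
  also have "frob n2 n3 n (\<lambda>i j k. \<Sum>jj\<in>{1..<n}. Q jj i j k) \<le> (\<Sum>jj\<in>{1..<n}. frob n2 n3 n (Q jj))"
    by (rule frob_sum) simp
  also have "(\<Sum>jj\<in>{1..<n}. frob n2 n3 n (Q jj)) \<le> (\<Sum>jj\<in>{1..<n}. \<mu> * E (int t - int jj))"
    by (rule sum_mono) (rule Qb)
  also have "frob n2 n3 n (tprod n2 n P (D t)) \<le> opnorm n2 n2 n P * frob n2 n3 n (D t)"
    by (rule opnorm_ineq[OF dims(2) n])
  also have "opnorm n2 n2 n P * frob n2 n3 n (D t) \<le> \<kappa> * frob n2 n3 n (D t)"
    by (rule mult_right_mono[OF Pk frob_nonneg])
  also have "frob n2 n3 n (D t) = E (int t)" unfolding Ejs by simp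
  also have "{1..<n} = {1..n-1}" using n by auto
  finally show "E (int t + 1) \<le> \<kappa> * E (int t) + \<alpha> * \<mu> * (\<Sum>i=1..n-1. E (int t - int i))"
    using alpha by (simp add: sum_distrib_left mult.assoc)
qed

end
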